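(* For every integer $M\ge 0$, every $n\ge1$ and every $\rho>0$, the randomized mechanism $(X_1,\dots,X_n)\in([0,1]^d)^n\mapsto \hat f_M$ (equivalently, the mechanism releasing $(\hat\theta_k)_{k\in\{-M,\dots,M\}^d}$) is $\rho$-zCDP when $\sigma_M=\frac{2\sqrt{(2M+1)^d}}{n\sqrt{\rho}}$.
   Context: For $k\in\mathbb{Z}^d$, $\phi_k(x)=e^{i2\pi\langle k,x\rangle}$ on $[0,1]^d$. Given data $X_1,\dots,X_n\in[0,1]^d$, $\tilde\theta_k=\frac1n\sum_{j=1}^n\overline{\phi_k(X_j)}$, $\hat\theta_k=\tilde\theta_k+\sigma_M\xi_k$ with $(\xi_k)$ i.i.d. $\mathcal N(0,1)+i\mathcal N(0,1)$ independent of the data, and $\hat f_M=\sum_{k\in\{-M,\dots,M\}^d}\hat\theta_k\phi_k$. Two datasets in $([0,1]^d)^n$ are neighbors if they differ in at most one entry (Hamming distance $\le1$). A randomized mechanism $\mathcal M$ is $\rho$-zero-concentrated differentially private ($\rho$-zCDP) if for all neighboring datasets $\mathbf X,\mathbf Y$ and all $\alpha\in(1,\infty)$, $D_\alpha(\mathcal M(\mathbf X)\|\mathcal M(\mathbf Y))\le\rho\alpha$, where $D_\alpha(P\|Q)=\frac1{\alpha-1}\log\int (dP/dQ)^{\alpha-1}dQ$ is the Rényi divergence. *)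

theory Defs
  imports "HOL-Probability.Probability"
begin

text \<open>Fourier basis on [0,1]^d; points are real^'d, frequencies int^'d, d = CARD('d).\<close>

definition ip :: "int^'d \<Rightarrow> real^'d \<Rightarrow> real" where
  "ip k x = (\<Sum>i\<in>UNIV. real_of_int (k $ i) * x $ i)"

definition phi :: "int^'d \<Rightarrow> real^'d \<Rightarrow> complex" where
  "phi k x = exp (\<i> * complex_of_real (2 * pi * ip k x))"

definition freq_set :: "nat \<Rightarrow> (int^'d) set" where
  "freq_set M = {k. \<forall>i. - int M \<le> k $ i \<and> k $ i \<le> int M}"

definition unit_cube :: "(real^'d) set" where
  "unit_cube = {x. \<forall>i. 0 \<le> x $ i \<and> x $ i \<le> 1}"

definition datasets :: "nat \<Rightarrow> (real^'d) list set" where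
  "datasets n = {Xs. length Xs = n \<and> set Xs \<subseteq> unit_cube}"

definition neighbors :: "'a list \<Rightarrow> 'a list \<Rightarrow> bool" where
  "neighbors Xs Ys \<longleftrightarrow> length Xs = length Ys \<and>
     card {j. j < length Xs \<and> Xs ! j \<noteq> Ys ! j} \<le> 1"

definition emp_coeff :: "(real^'d) list \<Rightarrow> int^'d \<Rightarrow> complex" where
  "emp_coeff Xs k = (\<Sum>j<length Xs. cnj (phi k (Xs ! j))) / of_nat (length Xs)"

text \<open>Law of \<mu> + \<sigma>(N(0,1) + i N(0,1)) (independent real and imaginary parts).\<close>
definition complex_normal :: "complex \<Rightarrow> real \<Rightarrow> complex measure" where
  "complex_normal \<mu> \<sigma> =
     distr (density lborel (normal_density (Re \<mu>) \<sigma>) \<Otimes>\<^sub>M density lborel (normal_density (Im \<mu>) \<sigma>))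
           borel (\<lambda>(a, b). Complex a b)"

definition fourier_mech :: "nat \<Rightarrow> real \<Rightarrow> (real^'d) list \<Rightarrow> (int^'d \<Rightarrow> complex) measure" where
  "fourier_mech M \<sigma> Xs = (\<Pi>\<^sub>M k\<in>freq_set M. complex_normal (emp_coeff Xs k) \<sigma>)"

definition renyi_div :: "real \<Rightarrow> 'a measure \<Rightarrow> 'a measure \<Rightarrow> ereal" where
  "renyi_div \<alpha> P Q =
     (let I = (\<integral>\<^sup>+ x. ennreal (enn2real (RN_deriv Q P x) powr (\<alpha> - 1)) \<partial>Q)
      in if absolutely_continuous Q P \<and> sets P = sets Q \<and> I < \<infinity>
         then ereal (ln (enn2real I) / (\<alpha> - 1)) else \<infinity>)"

definition zCDP :: "real \<Rightarrow> ('x list \<Rightarrow> 'b measure) \<Rightarrow> 'x list set \<Rightarrow> bool" where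
  "zCDP \<rho> mech D \<longleftrightarrow>
     (\<forall>Xs\<in>D. \<forall>Ys\<in>D. neighbors Xs Ys \<longrightarrow>
        (\<forall>\<alpha>>1. renyi_div \<alpha> (mech Xs) (mech Ys) \<le> ereal (\<rho> * \<alpha>)))"

end

theory Submission
  imports Defs
begin

definition lamC :: "complex measure" where
  "lamC = distr (lborel \<Otimes>\<^sub>M lborel) borel (\<lambda>(a, b). Complex a b)"

definition gC :: "complex \<Rightarrow> real \<Rightarrow> complex \<Rightarrow> real" where
  "gC c s z = normal_density (Re c) s (Re z) * normal_density (Im c) s (Im z)"

lemma meas_Complex[measurable]: "(\<lambda>(a, b). Complex a b) \<in> borel_measurable (lborel \<Otimes>\<^sub>M lborel)"
proof -
  have "(\<lambda>p::real\<times>real. complex_of_real (fst p) + \<i> * complex_of_real (snd p)) \<in> borel_measurable (lborel \<Otimes>\<^sub>M lborel)"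
    by measurable
  moreover have "(\<lambda>(a, b). Complex a b) = (\<lambda>p::real\<times>real. complex_of_real (fst p) + \<i> * complex_of_real (snd p))"
    by (auto simp: complex_eq_iff)
  ultimately show ?thesis by simp
qed

lemma gC_meas[measurable]: "gC c s \<in> borel_measurable borel"
  unfolding gC_def normal_density_def by measurable

lemma complex_normal_density:
  assumes "0 < s" shows "complex_normal c s = density lamC (\<lambda>z. ennreal (gC c s z))"
proof -
  have "complex_normal c s = distr (density (lborel \<Otimes>\<^sub>M lborel)
      (\<lambda>(x,y). ennreal (normal_density (Re c) s x) * ennreal (normal_density (Im c) s y))) borel (\<lambda>(a, b). Complex a b)"
    unfolding complex_normal_def
    using assms by (subst pair_measure_density) (auto intro!: prob_space_imp_sigma_finite prob_space_normal_density
       lborel.sigma_finite_measure_axioms)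
  also have "\<dots> = distr (density (lborel \<Otimes>\<^sub>M lborel)
      (\<lambda>p. ennreal (gC c s ((\<lambda>(a, b). Complex a b) p)))) borel (\<lambda>(a, b). Complex a b)"
    by (intro arg_cong2[where f="\<lambda>M X. distr M borel X"] density_cong refl)
      (auto simp: gC_def ennreal_mult' normal_density_nonneg ennreal_mult'')
  also have "\<dots> = density lamC (\<lambda>z. ennreal (gC c s z))"
    unfolding lamC_def by (subst density_distr) auto
  finally show ?thesis .
qed

lemma prob_complex_normal: assumes "0 < s" shows "prob_space (complex_normal c s)"
  unfolding complex_normal_def
  using assms by (intro prob_space.prob_space_distr prob_space_pair prob_space_normal_density) auto

definition EE :: "complex \<Rightarrow> complex \<Rightarrow> real \<Rightarrow> complex \<Rightarrow> real" where
  "EE c d s z = (((Re z - Re d)\<^sup>2 + (Im z - Im d)\<^sup>2) - ((Re z - Re c)\<^sup>2 + (Im z - Im c)\<^sup>2)) / (2 * s\<^sup>2)"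

lemma EE_meas[measurable]: "EE c d s \<in> borel_measurable borel"
  unfolding EE_def by measurable

lemma gC_nonneg: "0 < s \<Longrightarrow> 0 \<le> gC c s z"
  unfolding gC_def by (simp add: normal_density_nonneg)

lemma gC_ratio:
  assumes "0 < s"
  shows "gC d s z * exp (b * EE c d s z) =
     exp (b * (b - 1) * ((Re c - Re d)\<^sup>2 + (Im c - Im d)\<^sup>2) / (2 * s\<^sup>2)) * gC (of_real b * c + of_real (1 - b) * d) s z"
proof -
  have "- ((Re z - Re d)\<^sup>2 / (2 * s\<^sup>2)) + - ((Im z - Im d)\<^sup>2 / (2 * s\<^sup>2)) + b * EE c d s z =
     b * (b - 1) * ((Re c - Re d)\<^sup>2 + (Im c - Im d)\<^sup>2) / (2 * s\<^sup>2) +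
     (- ((Re z - (b * Re c + (1 - b) * Re d))\<^sup>2 / (2 * s\<^sup>2)) + - ((Im z - (b * Im c + (1 - b) * Im d))\<^sup>2 / (2 * s\<^sup>2)))"
    using assms unfolding EE_def by (simp add: field_simps power2_eq_square)
  then have "exp (- ((Re z - Re d)\<^sup>2 / (2 * s\<^sup>2))) * exp (- ((Im z - Im d)\<^sup>2 / (2 * s\<^sup>2))) * exp (b * EE c d s z) =
     exp (b * (b - 1) * ((Re c - Re d)\<^sup>2 + (Im c - Im d)\<^sup>2) / (2 * s\<^sup>2)) *
     (exp (- ((Re z - (b * Re c + (1 - b) * Re d))\<^sup>2 / (2 * s\<^sup>2))) * exp (- ((Im z - (b * Im c + (1 - b) * Im d))\<^sup>2 / (2 * s\<^sup>2))))"
    by (simp only: exp_add[symmetric])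
  then show ?thesis
    unfolding gC_def normal_density_def by (simp add: mult_ac)
qed

lemma complex_normal_shift:
  assumes "0 < s"
  shows "complex_normal c s = density (complex_normal d s) (\<lambda>z. ennreal (exp (EE c d s z)))"
proof -
  have "density (complex_normal d s) (\<lambda>z. ennreal (exp (EE c d s z))) =
     density lamC (\<lambda>z. ennreal (gC d s z) * ennreal (exp (EE c d s z)))"
    unfolding complex_normal_density[OF assms] lamC_def
    by (subst density_density_eq) auto
  also have "\<dots> = density lamC (\<lambda>z. ennreal (gC c s z))"
    using gC_ratio[OF assms, where d=d and b=1 and c=c] gC_nonneg[OF assms]
    unfolding lamC_def by (intro density_cong refl) (auto simp: ennreal_mult''[symmetric])
  finally show ?thesis using complex_normal_density[OF assms] by simp
qed

lemma complex_normal_moment: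
  assumes "0 < s"
  shows "(\<integral>\<^sup>+ z. ennreal (exp (b * EE c d s z)) \<partial>complex_normal d s) =
    ennreal (exp (b * (b - 1) * ((Re c - Re d)\<^sup>2 + (Im c - Im d)\<^sup>2) / (2 * s\<^sup>2)))"
proof -
  let ?m = "of_real b * c + of_real (1 - b) * d"
  let ?K = "exp (b * (b - 1) * ((Re c - Re d)\<^sup>2 + (Im c - Im d)\<^sup>2) / (2 * s\<^sup>2))"
  have "(\<integral>\<^sup>+ z. ennreal (exp (b * EE c d s z)) \<partial>complex_normal d s) =
     (\<integral>\<^sup>+ z. ennreal (gC d s z) * ennreal (exp (b * EE c d s z)) \<partial>lamC)"
    unfolding complex_normal_density[OF assms] lamC_def
    by (subst nn_integral_density) auto
  also have "\<dots> = (\<integral>\<^sup>+ z. ennreal ?K * ennreal (gC ?m s z) \<partial>lamC)"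
    using gC_ratio[OF assms, where d=d and b=b and c=c] gC_nonneg[OF assms]
    by (intro nn_integral_cong) (auto simp: ennreal_mult''[symmetric])
  also have "\<dots> = ennreal ?K * (\<integral>\<^sup>+ z. ennreal (gC ?m s z) \<partial>lamC)"
    unfolding lamC_def by (subst nn_integral_cmult) auto
  also have "(\<integral>\<^sup>+ z. ennreal (gC ?m s z) \<partial>lamC) = (\<integral>\<^sup>+ z. ennreal (gC ?m s z) * 1 \<partial>lamC)"
    by simp
  also have "\<dots> = (\<integral>\<^sup>+ z. 1 \<partial>complex_normal ?m s)"
    unfolding complex_normal_density[OF assms] lamC_def
    by (subst nn_integral_density) auto
  also have "\<dots> = 1"
    using prob_space.emeasure_space_1[OF prob_complex_normal[OF assms]] by simp
  finally show ?thesis by simp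
qed

lemma indicator_PiE_prod:
  assumes "finite I" "x \<in> extensional I"
  shows "indicator (Pi\<^sub>E I A) x = (\<Prod>i\<in>I. indicator (A i) (x i) :: ennreal)"
proof (cases "\<forall>i\<in>I. x i \<in> A i")
  case True
  then have "x \<in> Pi\<^sub>E I A" using assms(2) by (auto simp: PiE_def)
  then show ?thesis using True by simp
next
  case False
  then obtain i where "i \<in> I" "x i \<notin> A i" by auto
  then have "x \<notin> Pi\<^sub>E I A" by auto
  then show ?thesis using \<open>i \<in> I\<close> \<open>x i \<notin> A i\<close> assms(1)
    by (auto intro!: prod_zero[symmetric] bexI[of _ i])
qed

lemma PiM_density:
  assumes I: "finite I" and pM: "\<And>i. prob_space (M i)" and pD: "\<And>i. prob_space (density (M i) (f i))"
    and fm[measurable]: "\<And>i. f i \<in> borel_measurable (M i)"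
  shows "PiM I (\<lambda>i. density (M i) (f i)) = density (PiM I M) (\<lambda>x. \<Prod>i\<in>I. f i (x i))"
proof -
  interpret PM: product_sigma_finite M
    unfolding product_sigma_finite_def using pM by (auto intro: prob_space_imp_sigma_finite)
  interpret PD: product_sigma_finite "\<lambda>i. density (M i) (f i)"
    unfolding product_sigma_finite_def using pD by (auto intro: prob_space_imp_sigma_finite)
  have sets_eq: "sets (PiM I (\<lambda>i. density (M i) (f i))) = sets (PiM I M)"
    by (intro sets_PiM_cong) auto
  have meas: "(\<lambda>x. \<Prod>i\<in>I. f i (x i)) \<in> borel_measurable (PiM I M)"
    by measurable
  show ?thesis
  proof (rule PD.PiM_eqI[OF I, symmetric])
    show "sets (density (Pi\<^sub>M I M) (\<lambda>x. \<Prod>i\<in>I. f i (x i))) = sets (Pi\<^sub>M I (\<lambda>i. density (M i) (f i)))"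
      using sets_eq by simp
  next
    fix A assume A: "\<And>i. i \<in> I \<Longrightarrow> A i \<in> sets (density (M i) (f i))"
    then have A': "\<And>i. i \<in> I \<Longrightarrow> A i \<in> sets (M i)" by simp
    have "Pi\<^sub>E I A \<in> sets (PiM I M)"
      using A' by (intro sets_PiM_I_finite I) auto
    then have "emeasure (density (Pi\<^sub>M I M) (\<lambda>x. \<Prod>i\<in>I. f i (x i))) (Pi\<^sub>E I A) =
        (\<integral>\<^sup>+ x. (\<Prod>i\<in>I. f i (x i)) * indicator (Pi\<^sub>E I A) x \<partial>PiM I M)"
      using meas by (simp add: emeasure_density)
    also have "\<dots> = (\<integral>\<^sup>+ x. (\<Prod>i\<in>I. f i (x i) * indicator (A i) (x i)) \<partial>PiM I M)"
      by (intro nn_integral_cong)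
        (simp add: indicator_PiE_prod[OF I] space_PiM prod.distrib PiE_iff)
    also have "\<dots> = (\<Prod>i\<in>I. \<integral>\<^sup>+ y. f i y * indicator (A i) y \<partial>M i)"
      using A' by (intro PM.product_nn_integral_prod I) auto
    also have "\<dots> = (\<Prod>i\<in>I. emeasure (density (M i) (f i)) (A i))"
      using A' by (intro prod.cong refl) (simp add: emeasure_density)
    finally show "emeasure (density (Pi\<^sub>M I M) (\<lambda>x. \<Prod>i\<in>I. f i (x i))) (Pi\<^sub>E I A) =
        (\<Prod>i\<in>I. emeasure (density (M i) (f i)) (A i))" .
  qed
qed

lemma sets_cn[simp, measurable_cong]: "sets (complex_normal c s) = sets borel"
  unfolding complex_normal_def by simp

definition DD :: "complex \<Rightarrow> complex \<Rightarrow> real" where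
  "DD c d = (Re c - Re d)\<^sup>2 + (Im c - Im d)\<^sup>2"

lemma renyi_gauss:
  assumes I: "finite I" and s: "0 < s" and a: "1 < \<alpha>"
  shows "renyi_div \<alpha> (PiM I (\<lambda>k. complex_normal (c k) s)) (PiM I (\<lambda>k. complex_normal (d k) s)) =
     ereal ((\<alpha> - 2) * (\<Sum>k\<in>I. DD (c k) (d k)) / (2 * s\<^sup>2))"
proof -
  define P where "P = PiM I (\<lambda>k. complex_normal (c k) s)"
  define Q where "Q = PiM I (\<lambda>k. complex_normal (d k) s)"
  define G where "G = (\<lambda>x. \<Prod>k\<in>I. ennreal (exp (EE (c k) (d k) s (x k))))"
  define S where "S = (\<Sum>k\<in>I. DD (c k) (d k))"
  have pN: "\<And>k. prob_space (complex_normal (d k) s)" using prob_complex_normal[OF s] by auto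
  have Gm[measurable]: "G \<in> borel_measurable Q"
    unfolding G_def Q_def by measurable
  have "P = PiM I (\<lambda>k. density (complex_normal (d k) s) (\<lambda>z. ennreal (exp (EE (c k) (d k) s z))))"
    unfolding P_def using complex_normal_shift[OF s] by (intro PiM_cong refl) auto
  also have "\<dots> = density Q G"
    unfolding Q_def G_def
    by (rule PiM_density[OF I pN]) (auto simp: complex_normal_shift[OF s, symmetric] prob_complex_normal[OF s])
  finally have PQ: "P = density Q G" .
  have pQ: "prob_space Q" unfolding Q_def by (intro prob_space_PiM pN)
  interpret Q: sigma_finite_measure Q using pQ by (rule prob_space_imp_sigma_finite)
  interpret PD: product_sigma_finite "\<lambda>k. complex_normal (d k) s"
    unfolding product_sigma_finite_def using pN by (auto intro: prob_space_imp_sigma_finite)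
  have AE: "AE x in Q. G x = RN_deriv Q P x"
    using Q.RN_deriv_unique[OF Gm PQ[symmetric]] .
  have "(\<integral>\<^sup>+ x. ennreal (enn2real (RN_deriv Q P x) powr (\<alpha> - 1)) \<partial>Q) =
      (\<integral>\<^sup>+ x. (\<Prod>k\<in>I. ennreal (exp ((\<alpha> - 1) * EE (c k) (d k) s (x k)))) \<partial>Q)"
  proof (rule nn_integral_cong_AE)
    show "AE x in Q. ennreal (enn2real (RN_deriv Q P x) powr (\<alpha> - 1)) =
        (\<Prod>k\<in>I. ennreal (exp ((\<alpha> - 1) * EE (c k) (d k) s (x k))))"
      using AE
    proof eventually_elim
      case (elim x)
      have "enn2real (RN_deriv Q P x) = exp (\<Sum>k\<in>I. EE (c k) (d k) s (x k))"
        unfolding elim[symmetric] G_def using I by (simp add: prod_ennreal exp_sum prod_nonneg)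
      then have "enn2real (RN_deriv Q P x) powr (\<alpha> - 1) = exp (\<Sum>k\<in>I. (\<alpha> - 1) * EE (c k) (d k) s (x k))"
        by (simp add: exp_powr_real sum_distrib_left mult.commute)
      then show ?case using I by (simp add: exp_sum prod_ennreal)
    qed
  qed
  also have "\<dots> = (\<Prod>k\<in>I. \<integral>\<^sup>+ z. ennreal (exp ((\<alpha> - 1) * EE (c k) (d k) s z)) \<partial>complex_normal (d k) s)"
    unfolding Q_def by (intro PD.product_nn_integral_prod I) auto
  also have "\<dots> = (\<Prod>k\<in>I. ennreal (exp ((\<alpha> - 1) * (\<alpha> - 1 - 1) * DD (c k) (d k) / (2 * s\<^sup>2))))"
    unfolding DD_def by (intro prod.cong refl complex_normal_moment s)
  also have "\<dots> = ennreal (exp ((\<alpha> - 1) * ((\<alpha> - 2) * S / (2 * s\<^sup>2))))"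
    unfolding S_def using I by (simp add: prod_ennreal exp_sum sum_distrib_left sum_divide_distrib mult_ac)
  finally have Ieq: "(\<integral>\<^sup>+ x. ennreal (enn2real (RN_deriv Q P x) powr (\<alpha> - 1)) \<partial>Q) =
      ennreal (exp ((\<alpha> - 1) * ((\<alpha> - 2) * S / (2 * s\<^sup>2))))" .
  have ac: "absolutely_continuous Q P" unfolding PQ by (rule absolutely_continuousI_density[OF Gm])
  have se: "sets P = sets Q" unfolding PQ by simp
  show ?thesis
    unfolding P_def[symmetric] Q_def[symmetric] S_def[symmetric] renyi_div_def Let_def Ieq
    using ac se a by simp
qed

lemma freq_set_fin_card:
  "finite (freq_set M :: (int^'d) set) \<and> card (freq_set M :: (int^'d) set) \<le> (2 * M + 1) ^ CARD('d)"
proof -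
  let ?B = "PiE (UNIV :: 'd set) (\<lambda>_. {- int M..int M})"
  have sub: "(freq_set M :: (int^'d) set) \<subseteq> vec_lambda ` ?B"
  proof
    fix k :: "int^'d" assume "k \<in> freq_set M"
    then have "(\<lambda>i. k $ i) \<in> ?B" by (auto simp: freq_set_def)
    then show "k \<in> vec_lambda ` ?B" by (intro image_eqI[of _ _ "\<lambda>i. k $ i"]) auto
  qed
  have finB: "finite ?B" by (intro finite_PiE) auto
  have cB: "card ?B = (2 * M + 1) ^ CARD('d)"
  proof -
    have "nat (2 * int M + 1) = 2 * M + 1" by simp
    then show ?thesis by (simp add: card_PiE)
  qed
  have "card (freq_set M :: (int^'d) set) \<le> card (vec_lambda ` ?B)"
    using sub finB by (intro card_mono) auto
  also have "\<dots> \<le> card ?B" by (rule card_image_le[OF finB])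
  finally show ?thesis using finite_subset[OF sub finite_imageI[OF finB]] cB by auto
qed

lemma norm_phi: "norm (phi k x) = 1"
  unfolding phi_def by (simp add: norm_exp_i_times)

lemma norm_cnj_phi: "norm (cnj (phi k x)) = 1"
  by (simp add: norm_phi)

lemma DD_bound:
  assumes "neighbors Xs Ys" "length Xs = n" "n \<ge> 1"
  shows "DD (emp_coeff Xs k) (emp_coeff Ys k) \<le> 4 / (real n)\<^sup>2"
proof -
  define f where "f j = cnj (phi k (Xs ! j)) - cnj (phi k (Ys ! j))" for j
  define S where "S = {j. j < length Xs \<and> Xs ! j \<noteq> Ys ! j}"
  have lY: "length Ys = n" using assms unfolding neighbors_def by auto
  have cS: "card S \<le> 1" using assms(1) unfolding neighbors_def S_def by auto
  have SS: "S \<subseteq> {..<n}" using assms(2) unfolding S_def by auto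
  have diff: "emp_coeff Xs k - emp_coeff Ys k = (\<Sum>j<n. f j) / of_nat n"
    unfolding emp_coeff_def f_def using assms(2) lY by (simp add: sum_subtractf diff_divide_distrib)
  have "(\<Sum>j<n. f j) = (\<Sum>j\<in>S. f j)"
    using SS by (intro sum.mono_neutral_right) (auto simp: S_def f_def assms(2))
  then have "norm (\<Sum>j<n. f j) \<le> (\<Sum>j\<in>S. norm (f j))"
    by (simp add: norm_sum)
  also have "\<dots> \<le> (\<Sum>j\<in>S. 2)"
  proof (intro sum_mono)
    fix j show "norm (f j) \<le> 2"
      unfolding f_def using norm_triangle_ineq4[of "cnj (phi k (Xs ! j))" "cnj (phi k (Ys ! j))"]
      by (simp add: norm_phi)
  qed
  also have "\<dots> \<le> 2" using cS by simp
  finally have nf: "norm (\<Sum>j<n. f j) \<le> 2" .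
  have "cmod (emp_coeff Xs k - emp_coeff Ys k) \<le> 2 / real n"
    unfolding diff using assms(3) nf by (simp add: norm_divide divide_right_mono)
  then have "(cmod (emp_coeff Xs k - emp_coeff Ys k))\<^sup>2 \<le> (2 / real n)\<^sup>2"
    by (intro power_mono) auto
  moreover have "DD (emp_coeff Xs k) (emp_coeff Ys k) = (cmod (emp_coeff Xs k - emp_coeff Ys k))\<^sup>2"
    unfolding DD_def by (simp add: cmod_power2)
  ultimately show ?thesis by (simp add: power_divide)
qed

theorem theorem3p2:
  fixes M n :: nat and \<rho> :: real
  assumes "n \<ge> 1" and "\<rho> > 0"
  shows "zCDP \<rho>
     (fourier_mech M (2 * sqrt ((2 * real M + 1) ^ CARD('d)) / (real n * sqrt \<rho>))
        :: (real^'d) list \<Rightarrow> (int^'d \<Rightarrow> complex) measure)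
     (datasets n)"
proof -
  define K where "K = (2 * real M + 1) ^ CARD('d)"
  define \<sigma> where "\<sigma> = 2 * sqrt K / (real n * sqrt \<rho>)"
  define F where "F = (freq_set M :: (int^'d) set)"
  have Kpos: "K \<ge> 1" unfolding K_def by simp
  have npos: "real n > 0" using assms(1) by simp
  have \<sigma>pos: "\<sigma> > 0" unfolding \<sigma>_def using Kpos npos assms(2) by simp
  have \<sigma>2: "\<sigma>\<^sup>2 = 4 * K / ((real n)\<^sup>2 * \<rho>)"
    unfolding \<sigma>_def using Kpos assms(2) by (simp add: power_divide power_mult_distrib)
  have finF: "finite F" and cardF: "real (card F) \<le> K"
  proof -
    show "finite F" using freq_set_fin_card unfolding F_def by blast
    have "card F \<le> (2 * M + 1) ^ CARD('d)" using freq_set_fin_card unfolding F_def by blast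
    then have "real (card F) \<le> real ((2 * M + 1) ^ CARD('d))" by linarith
    then show "real (card F) \<le> K" unfolding K_def by (simp add: add.commute)
  qed
  show ?thesis
    unfolding zCDP_def \<sigma>_def[symmetric] K_def[symmetric]
  proof (intro ballI impI allI)
    fix Xs Ys :: "(real^'d) list" and \<alpha> :: real
    assume X: "Xs \<in> datasets n" and Y: "Ys \<in> datasets n" and nb: "neighbors Xs Ys" and a: "1 < \<alpha>"
    have lX: "length Xs = n" using X by (simp add: datasets_def)
    define S where "S = (\<Sum>k\<in>F. DD (emp_coeff Xs k) (emp_coeff Ys k))"
    have S0: "S \<ge> 0" unfolding S_def DD_def by (intro sum_nonneg) auto
    have "S \<le> (\<Sum>k\<in>F. 4 / (real n)\<^sup>2)"
      unfolding S_def by (intro sum_mono DD_bound[OF nb lX assms(1)])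
    also have "\<dots> = real (card F) * (4 / (real n)\<^sup>2)" by simp
    also have "\<dots> \<le> K * (4 / (real n)\<^sup>2)"
      by (intro mult_right_mono cardF) auto
    finally have Sle: "S \<le> K * (4 / (real n)\<^sup>2)" .
    have t: "S / (2 * \<sigma>\<^sup>2) \<le> \<rho> / 2"
    proof -
      have "S / (2 * \<sigma>\<^sup>2) = S * ((real n)\<^sup>2 * \<rho>) / (8 * K)"
        unfolding \<sigma>2 using Kpos npos assms(2) by (simp add: field_simps)
      also have "\<dots> \<le> K * (4 / (real n)\<^sup>2) * ((real n)\<^sup>2 * \<rho>) / (8 * K)"
        using Sle Kpos npos assms(2) by (intro divide_right_mono mult_right_mono) auto
      also have "\<dots> = \<rho> / 2" using Kpos npos by (simp add: field_simps)
      finally show ?thesis .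
    qed
    have t0: "S / (2 * \<sigma>\<^sup>2) \<ge> 0" using S0 by simp
    have "(\<alpha> - 2) * S / (2 * \<sigma>\<^sup>2) = (\<alpha> - 2) * (S / (2 * \<sigma>\<^sup>2))" by simp
    also have "\<dots> \<le> \<alpha> * (S / (2 * \<sigma>\<^sup>2))" using t0 by (intro mult_right_mono) auto
    also have "\<dots> \<le> \<alpha> * (\<rho> / 2)" using t a by (intro mult_left_mono) auto
    also have "\<dots> \<le> \<rho> * \<alpha>" using a assms(2) by simp
    finally have fin: "(\<alpha> - 2) * S / (2 * \<sigma>\<^sup>2) \<le> \<rho> * \<alpha>" .
    show "renyi_div \<alpha> (fourier_mech M \<sigma> Xs) (fourier_mech M \<sigma> Ys) \<le> ereal (\<rho> * \<alpha>)"
      unfolding fourier_mech_def F_def[symmetric]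
      using renyi_gauss[OF finF \<sigma>pos a, of "emp_coeff Xs" "emp_coeff Ys"] fin
      unfolding S_def by simp
  qed
qed

end
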